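(* Any Single-Source DSO must take $\Omega(\min\{M^{1/2}n^{3/2},\, n^2\})$ bits of space on at least one undirected graph with $O(n)$ vertices and integer edge weights in the range $[1,M]$.
   Context: For an undirected edge-weighted graph $G$, a source $s$, a target $t$ and an edge $e$, $d(s,t,e)$ is the length of a shortest $s$-$t$ path in $G-e$ ($\infty$ if none). A Single-Source Distance Sensitivity Oracle (DSO) with source $s$ is a data structure (depending on $G$ and $s$) that answers every query $(t,e)$ by returning $d(s,t,e)$. *)

theory Defs
  imports Complex_Main "HOL-Library.Extended_Nat"
begin

definition valid_graph :: "nat \<Rightarrow> nat set set \<Rightarrow> (nat set \<Rightarrow> nat) \<Rightarrow> nat \<Rightarrow> bool" where
  "valid_graph N E w M \<longleftrightarrow>
     E \<subseteq> {{u, v} | u v. u < N \<and> v < N \<and> u \<noteq> v} \<and>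
     (\<forall>e\<in>E. 1 \<le> w e \<and> w e \<le> M) \<and>
     (\<forall>e. e \<notin> E \<longrightarrow> w e = 0)"

definition is_walk :: "nat set set \<Rightarrow> nat \<Rightarrow> nat \<Rightarrow> nat list \<Rightarrow> bool" where
  "is_walk E u v xs \<longleftrightarrow> xs \<noteq> [] \<and> hd xs = u \<and> last xs = v \<and>
     (\<forall>i < length xs - 1. {xs ! i, xs ! Suc i} \<in> E)"

definition walk_weight :: "(nat set \<Rightarrow> nat) \<Rightarrow> nat list \<Rightarrow> nat" where
  "walk_weight w xs = (\<Sum>i < length xs - 1. w {xs ! i, xs ! Suc i})"

text \<open>d(s,t,e): length of a shortest s-t path in G - e (infinity if none).\<close>
definition dist_avoid :: "nat set set \<Rightarrow> (nat set \<Rightarrow> nat) \<Rightarrow> nat \<Rightarrow> nat \<Rightarrow> nat set \<Rightarrow> enat" where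
  "dist_avoid E w s t e = (INF xs \<in> {xs. is_walk (E - {e}) s t xs}. enat (walk_weight w xs))"

text \<open>A single-source DSO for graphs with integer weights in [1,M]: an encoder mapping
  (number of vertices, graph, source) to a bit string, and a fixed query procedure
  that answers every query (t,e) correctly from the bit string alone.\<close>
definition is_SSDSO ::
  "nat \<Rightarrow> (nat \<Rightarrow> nat set set \<Rightarrow> (nat set \<Rightarrow> nat) \<Rightarrow> nat \<Rightarrow> bool list)
       \<Rightarrow> (bool list \<Rightarrow> nat \<Rightarrow> nat set \<Rightarrow> enat) \<Rightarrow> bool" where
  "is_SSDSO M enc dec \<longleftrightarrow>
     (\<forall>N E w s. valid_graph N E w M \<and> s < N \<longrightarrow>
        (\<forall>t < N. \<forall>e \<in> E. dec (enc N E w s) t e = dist_avoid E w s t e))"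

end

theory Submission
  imports Defs
begin

lemma walk_single: "is_walk E s s [s]" "walk_weight w [s] = 0"
  by (auto simp: is_walk_def walk_weight_def)

lemma walk_snoc:
  assumes "is_walk E u v xs" "{v,y} \<in> E"
  shows "is_walk E u y (xs @ [y]) \<and> walk_weight w (xs @ [y]) = walk_weight w xs + w {v,y}"
proof -
  have ne: "xs \<noteq> []" and h: "hd xs = u" and l: "last xs = v"
    and ed: "\<forall>i < length xs - 1. {xs ! i, xs ! Suc i} \<in> E"
    using assms(1) by (auto simp: is_walk_def)
  have lv: "xs ! (length xs - 1) = v" using ne l by (simp add: last_conv_nth)
  have A: "is_walk E u y (xs @ [y])"
    unfolding is_walk_def
  proof (intro conjI allI impI)
    fix i assume i: "i < length (xs @ [y]) - 1"
    show "{(xs @ [y]) ! i, (xs @ [y]) ! Suc i} \<in> E"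
    proof (cases "i < length xs - 1")
      case True hence "i < length xs" "Suc i < length xs" by auto
      thus ?thesis using ed True by (simp add: nth_append)
    next
      case False
      hence "i = length xs - 1" using i by simp
      thus ?thesis using ne lv assms(2) by (simp add: nth_append)
    qed
  qed (use ne h in auto)
  have "walk_weight w (xs @ [y]) = (\<Sum>i < Suc (length xs - 1). w {(xs @ [y]) ! i, (xs @ [y]) ! Suc i})"
    using ne by (simp add: walk_weight_def)
  also have "\<dots> = (\<Sum>i < length xs - 1. w {(xs @ [y]) ! i, (xs @ [y]) ! Suc i}) + w {v, y}"
    using ne lv by (subst sum.lessThan_Suc) (simp add: nth_append)
  also have "(\<Sum>i < length xs - 1. w {(xs @ [y]) ! i, (xs @ [y]) ! Suc i}) = walk_weight w xs"
    unfolding walk_weight_def by (rule sum.cong) (auto simp: nth_append)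
  finally show ?thesis using A by simp
qed

definition reach :: "nat set set \<Rightarrow> (nat set \<Rightarrow> nat) \<Rightarrow> nat \<Rightarrow> nat \<Rightarrow> nat \<Rightarrow> bool" where
  "reach E w s v d \<longleftrightarrow> (\<exists>xs. is_walk E s v xs \<and> walk_weight w xs = d)"

lemma reach_start: "reach E w s s 0"
  unfolding reach_def using walk_single by blast

lemma reach_step: "reach E w s v d \<Longrightarrow> {v,y} \<in> E \<Longrightarrow> d' = d + w {v,y} \<Longrightarrow> reach E w s y d'"
  unfolding reach_def using walk_snoc by metis

lemma dist_le: "reach (E - {e}) w s t d \<Longrightarrow> dist_avoid E w s t e \<le> enat d"
  unfolding reach_def dist_avoid_def by (auto intro: INF_lower2)

lemma pot_lb:
  assumes P: "\<forall>e\<in>E. \<forall>a\<in>e. \<forall>b\<in>e. \<phi> b \<le> \<phi> a + w e" and W: "is_walk E s t xs"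
  shows "\<phi> t \<le> \<phi> s + walk_weight w xs"
proof -
  have ne: "xs \<noteq> []" and h: "hd xs = s" and l: "last xs = t"
    and ed: "\<forall>i < length xs - 1. {xs ! i, xs ! Suc i} \<in> E"
    using W by (auto simp: is_walk_def)
  have "\<forall>i. i < length xs \<longrightarrow> \<phi> (xs ! i) \<le> \<phi> (xs ! 0) + (\<Sum>l<i. w {xs ! l, xs ! Suc l})"
  proof
    fix i show "i < length xs \<longrightarrow> \<phi> (xs ! i) \<le> \<phi> (xs ! 0) + (\<Sum>l<i. w {xs ! l, xs ! Suc l})"
    proof (induction i)
      case 0 show ?case by simp
    next
      case (Suc i)
      show ?case
      proof
        assume "Suc i < length xs"
        hence e: "{xs ! i, xs ! Suc i} \<in> E" and il: "i < length xs" using ed by auto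
        have "\<phi> (xs ! Suc i) \<le> \<phi> (xs ! i) + w {xs ! i, xs ! Suc i}" using P e by blast
        thus "\<phi> (xs ! Suc i) \<le> \<phi> (xs ! 0) + (\<Sum>l<Suc i. w {xs ! l, xs ! Suc l})"
          using Suc.IH il by simp
      qed
    qed
  qed
  hence "\<phi> (xs ! (length xs - 1)) \<le> \<phi> (xs ! 0) + walk_weight w xs"
    using ne unfolding walk_weight_def by simp
  thus ?thesis using ne h l by (simp add: last_conv_nth hd_conv_nth)
qed

lemma dist_ge:
  assumes P: "\<forall>e\<in>E - {f}. \<forall>a\<in>e. \<forall>b\<in>e. \<phi> b \<le> \<phi> a + w e" and "\<phi> s = 0"
  shows "enat (\<phi> t) \<le> dist_avoid E w s t f"
  unfolding dist_avoid_def
proof (rule INF_greatest)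
  fix xs assume "xs \<in> {xs. is_walk (E - {f}) s t xs}"
  thus "enat (\<phi> t) \<le> enat (walk_weight w xs)" using pot_lb[OF P] assms(2) by force
qed

lemma count_lists:
  fixes F :: "'a \<Rightarrow> bool list"
  assumes "inj_on F A" "finite A" "card A = 2^L"
  shows "\<exists>a\<in>A. length (F a) \<ge> L"
proof (rule ccontr)
  assume "\<not> ?thesis"
  hence nA: "\<forall>a\<in>A. length (F a) < L" by auto
  have L: "L > 0"
  proof (rule ccontr)
    assume "\<not> L > 0" hence "card A = 1" using assms by simp
    hence "A \<noteq> {}" by auto
    thus False using nA \<open>\<not> L > 0\<close> by auto
  qed
  have sub: "F ` A \<subseteq> {xs. set xs \<subseteq> UNIV \<and> length xs \<le> L - 1}"
  proof (rule image_subsetI)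
    fix a assume "a \<in> A"
    hence "length (F a) < L" using nA by auto
    thus "F a \<in> {xs. set xs \<subseteq> UNIV \<and> length xs \<le> L - 1}" by simp
  qed
  have "card (F ` A) \<le> (\<Sum>i\<le>L-1. 2^i)"
    using card_mono[OF finite_lists_length_le[of "UNIV::bool set"] sub] card_lists_length_le[of "UNIV::bool set"]
    by simp
  also have "(\<Sum>i\<le>L-1. (2::nat)^i) < 2^L"
  proof -
    have "\<And>m. (\<Sum>i\<le>m. (2::nat)^i) = 2^Suc m - 1" by (induct_tac m) auto
    hence "(\<Sum>i\<le>L-1. (2::nat)^i) = 2^Suc (L-1) - 1" by blast
    also have "Suc (L - 1) = L" using L by simp
    finally show ?thesis by simp
  qed
  finally show False using assms card_image by fastforce
qed

locale cons =
  fixes M k n :: nat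
  assumes M1: "M \<ge> 1" and k1: "k \<ge> 1"
begin

definition T :: "nat \<Rightarrow> nat" where "T m = 2*k - 2*m"
definition q :: "nat \<Rightarrow> nat" where "q m = (T m + M - 1) div M"
definition R :: nat where "R = q 0"
definition B :: nat where "B = 2*k+1+n"
definition zv :: "nat \<Rightarrow> nat" where "zv m = k+1+m"
definition xv :: "nat \<Rightarrow> nat" where "xv t = 2*k+1+t"
definition Pv :: "nat \<Rightarrow> nat \<Rightarrow> nat" where
  "Pv m l = (if l = 0 then m else if l = q m then zv m else B + m*R + l)"
definition psi0 :: "nat \<Rightarrow> nat" where
  "psi0 v = (if v \<le> k then v else if v \<le> 2*k then 2*k - (v-(k+1)) else if v < B then 0
     else (v-B) div R + min (T ((v-B) div R)) (((v-B) mod R) * M))"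
definition isX :: "nat \<Rightarrow> bool" where "isX v \<longleftrightarrow> 2*k+1 \<le> v \<and> v < B"
definition idx :: "nat \<Rightarrow> nat" where
  "idx v = (if v \<le> k then v else if v \<le> 2*k then v - (k+1) else (v - B) div R)"
definition PE :: "nat set set" where "PE = {{m, Suc m} | m. m < k}"
definition QE :: "nat set set" where "QE = {{Pv m l, Pv m (Suc l)} | m l. m < k \<and> l < q m}"
definition HE :: "(nat \<times> nat) set \<Rightarrow> nat set set" where
  "HE S = {{zv m, xv t} | m t. (m,t) \<in> S \<and> m < k \<and> t < n}"
definition EE :: "(nat \<times> nat) set \<Rightarrow> nat set set" where "EE S = PE \<union> QE \<union> HE S"
definition WW :: "(nat \<times> nat) set \<Rightarrow> nat set \<Rightarrow> nat" where
  "WW S e = (if e \<in> EE S then (if \<exists>v\<in>e. isX v then 1 else Max (psi0 ` e) - Min (psi0 ` e)) else 0)"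
definition NN :: nat where "NN = B + k*R"

lemma T_ge: "m < k \<Longrightarrow> T m \<ge> 2" unfolding T_def by simp

lemma q_less_iff: "l < q m \<longleftrightarrow> l * M < T m"
proof -
  have "l < q m \<longleftrightarrow> Suc l \<le> q m" by (rule Suc_le_eq[symmetric])
  also have "\<dots> \<longleftrightarrow> Suc l * M \<le> T m + M - 1"
    unfolding q_def using M1 by (intro less_eq_div_iff_mult_less_eq) simp
  also have "\<dots> \<longleftrightarrow> l * M < T m" using M1 by auto
  finally show ?thesis .
qed

lemma q_ge: "T m \<le> q m * M"
proof -
  have "\<not> q m < q m" by simp
  hence "\<not> q m * M < T m" using q_less_iff by blast
  thus ?thesis by simp
qed

lemma q_pos: "m < k \<Longrightarrow> q m \<ge> 1"
  using q_less_iff[of 0 m] T_ge[of m] by simp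

lemma q_le_R: "q m \<le> R"
  unfolding R_def q_def T_def by (rule div_le_mono) simp

lemma psi0_Pv: assumes "m < k" "l \<le> q m" shows "psi0 (Pv m l) = m + min (T m) (l*M)"
proof -
  consider "l = 0" | "l = q m" "l \<noteq> 0" | "0 < l" "l < q m" using assms by linarith
  thus ?thesis
  proof cases
    case 1 thus ?thesis using assms by (simp add: Pv_def psi0_def)
  next
    case 2 thus ?thesis using assms q_ge[of m] by (simp add: Pv_def psi0_def zv_def T_def)
  next
    case 3
    have lR: "l < R" using 3 q_le_R[of m] by simp
    hence "(m*R + l) div R = m" "(m*R + l) mod R = l" by auto
    thus ?thesis using 3 by (simp add: Pv_def psi0_def B_def)
  qed
qed

lemma Pv_facts: assumes "m < k" "l \<le> q m"
  shows "Pv m l < NN" "\<not> isX (Pv m l)" "idx (Pv m l) = m"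
proof -
  consider "l = 0" | "l = q m" "l \<noteq> 0" | "0 < l" "l < q m" using assms by linarith
  hence "Pv m l < NN \<and> \<not> isX (Pv m l) \<and> idx (Pv m l) = m"
  proof cases
    case 1 thus ?thesis using assms by (simp add: Pv_def NN_def B_def isX_def idx_def)
  next
    case 2 thus ?thesis using assms by (simp add: Pv_def NN_def B_def isX_def idx_def zv_def)
  next
    case 3
    have lR: "l < R" using 3 q_le_R[of m] by simp
    hence d: "(m*R + l) div R = m" by auto
    have "m * R + l < k * R"
    proof -
      have "Suc m * R \<le> k * R" using assms by (intro mult_le_mono1) simp
      thus ?thesis using lR by simp
    qed
    thus ?thesis using 3 d by (simp add: Pv_def NN_def isX_def idx_def B_def)
  qed
  thus "Pv m l < NN" "\<not> isX (Pv m l)" "idx (Pv m l) = m" by auto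
qed

lemma step_bounds: assumes "l < q m"
  shows "min (T m) (l*M) < min (T m) (Suc l*M)" "min (T m) (Suc l*M) \<le> min (T m) (l*M) + M"
  using assms q_less_iff[of l m] M1 by auto

lemma Pv_ne: assumes "m < k" "l < q m" shows "Pv m l \<noteq> Pv m (Suc l)"
  using psi0_Pv[of m l] psi0_Pv[of m "Suc l"] step_bounds[OF assms(2)] assms by auto

lemma WW_PE: "m < k \<Longrightarrow> WW S {m, Suc m} = 1"
  by (auto simp: WW_def EE_def PE_def isX_def psi0_def B_def)

lemma WW_QE: assumes "m < k" "l < q m"
  shows "WW S {Pv m l, Pv m (Suc l)} = min (T m) (Suc l*M) - min (T m) (l*M)"
proof -
  have e: "{Pv m l, Pv m (Suc l)} \<in> EE S" using assms unfolding EE_def QE_def by blast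
  have nx: "\<not> isX (Pv m l)" "\<not> isX (Pv m (Suc l))" using Pv_facts assms by auto
  show ?thesis using step_bounds[OF assms(2)] psi0_Pv[of m l] psi0_Pv[of m "Suc l"] assms e nx
    by (simp add: WW_def)
qed

lemma WW_HE: "(m,t) \<in> S \<Longrightarrow> m < k \<Longrightarrow> t < n \<Longrightarrow> WW S {zv m, xv t} = 1"
  unfolding WW_def EE_def HE_def by (auto simp: isX_def xv_def B_def)

lemma valid: "valid_graph NN (EE S) (WW S) M"
  unfolding valid_graph_def
proof (intro conjI)
  show "EE S \<subseteq> {{u, v} | u v. u < NN \<and> v < NN \<and> u \<noteq> v}"
  proof
    fix e assume "e \<in> EE S"
    then consider (P) m where "e = {m, Suc m}" "m < k"
      | (Q) m l where "e = {Pv m l, Pv m (Suc l)}" "m < k" "l < q m"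
      | (H) m t where "e = {zv m, xv t}" "m < k" "t < n"
      unfolding EE_def PE_def QE_def HE_def by blast
    thus "e \<in> {{u, v} | u v. u < NN \<and> v < NN \<and> u \<noteq> v}"
    proof cases
      case P
      have "m < NN" "Suc m < NN" "m \<noteq> Suc m" using P(2) by (simp_all add: NN_def B_def)
      thus ?thesis using P(1) by blast
    next
      case Q thus ?thesis using Pv_facts(1)[of m l] Pv_facts(1)[of m "Suc l"] Pv_ne[of m l] by auto
    next
      case H
      have "zv m < NN" "xv t < NN" "zv m \<noteq> xv t" using H(2,3) by (simp_all add: NN_def B_def zv_def xv_def)
      thus ?thesis using H(1) by blast
    qed
  qed
  show "\<forall>e\<in>EE S. 1 \<le> WW S e \<and> WW S e \<le> M"
  proof
    fix e assume "e \<in> EE S"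
    then consider (P) m where "e = {m, Suc m}" "m < k"
      | (Q) m l where "e = {Pv m l, Pv m (Suc l)}" "m < k" "l < q m"
      | (H) m t where "e = {zv m, xv t}" "m < k" "t < n" "(m,t) \<in> S"
      unfolding EE_def PE_def QE_def HE_def by blast
    thus "1 \<le> WW S e \<and> WW S e \<le> M"
    proof cases
      case P thus ?thesis using WW_PE M1 by auto
    next
      case Q thus ?thesis using WW_QE[of m l] step_bounds[of l m] by auto
    next
      case H thus ?thesis using WW_HE M1 by auto
    qed
  qed
  show "\<forall>e. e \<notin> EE S \<longrightarrow> WW S e = 0" by (simp add: WW_def)
qed

end

context cons begin

lemma Pv_big: "m < k \<Longrightarrow> 1 \<le> l \<Longrightarrow> l \<le> q m \<Longrightarrow> Pv m l > k"
  by (auto simp: Pv_def zv_def B_def)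

lemma two_pts: "e = {p,r} \<Longrightarrow> a \<in> e \<Longrightarrow> b \<in> e \<Longrightarrow> (f::nat\<Rightarrow>nat) r \<le> f p + w \<Longrightarrow> f p \<le> f r + w \<Longrightarrow> f b \<le> f a + w"
  by auto

lemma minlip: "(A::nat) \<le> A' \<Longrightarrow> (if P then min c (m + A') else c) \<le> (if P then min c (m+A) else c) + (A' - A)"
  "(A::nat) \<le> A' \<Longrightarrow> (if P then min c (m + A) else c) \<le> (if P then min c (m+A') else c) + (A' - A)"
  by auto

lemma upper:
  assumes j: "j < k" and t: "t < n" and S: "(j,t) \<in> S"
  shows "dist_avoid (EE S) (WW S) 0 (xv t) {j, Suc j} \<le> enat (2*k - j + 1)"
proof -
  let ?E = "EE S - {{j, Suc j}}"
  have a: "m \<le> j \<Longrightarrow> reach ?E (WW S) 0 m m" for m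
  proof (induction m)
    case 0 show ?case by (rule reach_start)
  next
    case (Suc m)
    have "{m, Suc m} \<noteq> {j, Suc j}" using Suc.prems by (auto simp: doubleton_eq_iff)
    moreover have "{m, Suc m} \<in> EE S" using Suc.prems j unfolding EE_def PE_def by auto
    ultimately have e: "{m, Suc m} \<in> ?E" by blast
    have w: "WW S {m, Suc m} = 1" using Suc.prems j WW_PE by auto
    have r: "reach ?E (WW S) 0 m m" using Suc.IH Suc.prems by simp
    show ?case by (rule reach_step[OF r e]) (simp add: w)
  qed
  have b: "l \<le> q j \<Longrightarrow> reach ?E (WW S) 0 (Pv j l) (j + min (T j) (l*M))" for l
  proof (induction l)
    case 0 thus ?case using a[of j] by (simp add: Pv_def)
  next
    case (Suc l)
    have lq: "l < q j" using Suc.prems by simp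
    have "Pv j (Suc l) > k" using Pv_big[of j "Suc l"] Suc.prems j by simp
    hence "{Pv j l, Pv j (Suc l)} \<noteq> {j, Suc j}" using j by (auto simp: doubleton_eq_iff)
    moreover have "{Pv j l, Pv j (Suc l)} \<in> EE S" using j lq unfolding EE_def QE_def by blast
    ultimately have e: "{Pv j l, Pv j (Suc l)} \<in> ?E" by blast
    have w: "WW S {Pv j l, Pv j (Suc l)} = min (T j) (Suc l*M) - min (T j) (l*M)"
      using WW_QE[OF j lq] .
    show ?case
      by (rule reach_step[OF Suc.IH e]) (use lq w step_bounds[OF lq] in auto)
  qed
  have c: "reach ?E (WW S) 0 (zv j) (2*k - j)"
  proof -
    have "Pv j (q j) = zv j" using q_pos[OF j] by (simp add: Pv_def)
    moreover have "j + min (T j) (q j * M) = 2*k - j" using q_ge[of j] j by (simp add: T_def)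
    ultimately show ?thesis using b[of "q j"] by simp
  qed
  have "{zv j, xv t} \<in> EE S" using S j t unfolding EE_def HE_def by blast
  moreover have "{zv j, xv t} \<noteq> {j, Suc j}" using j by (auto simp: xv_def zv_def doubleton_eq_iff)
  ultimately have e: "{zv j, xv t} \<in> ?E" by blast
  have "reach ?E (WW S) 0 (xv t) (2*k - j + 1)"
    by (rule reach_step[OF c e]) (simp add: WW_HE[OF S j t])
  thus ?thesis by (rule dist_le)
qed

definition phi :: "nat \<Rightarrow> nat \<Rightarrow> nat \<Rightarrow> nat" where
  "phi j t v = (let D = 2*k - j + 1 in
     if isX v then (if v = xv t then D+1 else D) else if idx v \<le> j then min (D+1) (psi0 v) else D+1)"

lemma lower:
  assumes j: "j < k" and t: "t < n" and S: "(j,t) \<notin> S"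
  shows "enat (2*k - j + 2) \<le> dist_avoid (EE S) (WW S) 0 (xv t) {j, Suc j}"
proof -
  have P: "\<forall>e\<in>EE S - {{j, Suc j}}. \<forall>a\<in>e. \<forall>b\<in>e. phi j t b \<le> phi j t a + WW S e"
  proof (intro ballI)
    fix e a b assume e: "e \<in> EE S - {{j, Suc j}}" and ab: "a \<in> e" "b \<in> e"
    from e consider (P) m where "e = {m, Suc m}" "m < k" "m \<noteq> j"
      | (Q) m l where "e = {Pv m l, Pv m (Suc l)}" "m < k" "l < q m"
      | (H) m t' where "e = {zv m, xv t'}" "m < k" "t' < n" "(m,t') \<in> S"
      unfolding EE_def PE_def QE_def HE_def by blast
    thus "phi j t b \<le> phi j t a + WW S e"
    proof cases
      case P
      have f: "x \<in> {m, Suc m} \<Longrightarrow> phi j t x = (if x \<le> j then x else 2*k - j + 2)" for x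
        using P j by (auto simp: phi_def isX_def idx_def psi0_def B_def)
      show ?thesis using ab P f[of a] f[of b] WW_PE[of m S] by auto
    next
      case Q
      have f: "l' \<le> q m \<Longrightarrow> phi j t (Pv m l') =
          (if m \<le> j then min (2*k - j + 2) (m + min (T m) (l'*M)) else 2*k - j + 2)" for l'
        using Pv_facts[OF Q(2), of l'] psi0_Pv[OF Q(2), of l'] by (simp add: phi_def)
      have fa: "phi j t (Pv m l) = (if m \<le> j then min (2*k - j + 2) (m + min (T m) (l*M)) else 2*k - j + 2)"
        using f[of l] Q by simp
      have fb: "phi j t (Pv m (Suc l)) = (if m \<le> j then min (2*k - j + 2) (m + min (T m) (Suc l*M)) else 2*k - j + 2)"
        using f[of "Suc l"] Q by simp
      have w: "WW S e = min (T m) (Suc l*M) - min (T m) (l*M)" using WW_QE[OF Q(2,3)] Q(1) by simp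
      have sb: "min (T m) (l*M) < min (T m) (Suc l*M)" using step_bounds[OF Q(3)] by simp
      have "phi j t (Pv m (Suc l)) \<le> phi j t (Pv m l) + WW S e"
        unfolding fa fb w by (rule minlip(1)) (use sb in simp)
      moreover have "phi j t (Pv m l) \<le> phi j t (Pv m (Suc l)) + WW S e"
        unfolding fa fb w by (rule minlip(2)) (use sb in simp)
      ultimately show ?thesis using two_pts[OF Q(1) ab] by blast
    next
      case H
      have fx: "phi j t (xv t') = (if t' = t then 2*k - j + 2 else 2*k - j + 1)"
        using H by (simp add: phi_def isX_def xv_def B_def)
      have fz: "phi j t (zv m) = (if m \<le> j then min (2*k - j + 2) (2*k - m) else 2*k - j + 2)"
        using H by (simp add: phi_def isX_def zv_def B_def idx_def psi0_def)
      have w: "WW S e = 1" using WW_HE[OF H(4,2,3)] H(1) by simp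
      have mj: "m = j \<Longrightarrow> t' \<noteq> t" using H S by auto
      have xle: "phi j t (xv t') \<le> 2*k - j + 2" and xge: "2*k - j + 1 \<le> phi j t (xv t')"
        unfolding fx by simp_all
      have zle: "phi j t (zv m) \<le> 2*k - j + 2" unfolding fz by simp
      have "phi j t (xv t') \<le> phi j t (zv m) + WW S e"
      proof (cases "m \<le> j")
        case True
        show ?thesis
        proof (cases "m = j")
          case True
          hence "phi j t (xv t') = 2*k - j + 1" unfolding fx using mj by simp
          moreover have "phi j t (zv m) = 2*k - j" unfolding fz using True j by simp
          ultimately show ?thesis unfolding w by simp
        next
          case False
          hence "2*k - j + 1 \<le> 2*k - m" using \<open>m \<le> j\<close> j by linarith
          hence "2*k - j + 1 \<le> phi j t (zv m)" unfolding fz using \<open>m \<le> j\<close> by simp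
          thus ?thesis using xle unfolding w by linarith
        qed
      next
        case False
        hence "phi j t (zv m) = 2*k - j + 2" unfolding fz by simp
        thus ?thesis using xle unfolding w by linarith
      qed
      moreover have "phi j t (zv m) \<le> phi j t (xv t') + WW S e"
        using zle xge unfolding w by linarith
      ultimately show ?thesis using two_pts[OF H(1) ab] by blast
    qed
  qed
  have z: "phi j t 0 = 0" by (simp add: phi_def isX_def idx_def psi0_def)
  have x: "phi j t (xv t) = 2*k - j + 2" using t by (simp add: phi_def isX_def xv_def B_def)
  have "enat (phi j t (xv t)) \<le> dist_avoid (EE S) (WW S) 0 (xv t) {j, Suc j}" by (rule dist_ge[OF P z])
  thus ?thesis unfolding x .
qed

end

context cons begin
lemma distinguish:
  assumes D: "is_SSDSO M enc dec"
    and jt: "(j,t) \<in> S" "(j,t) \<notin> S'" "j < k" "t < n"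
  shows "enc NN (EE S) (WW S) 0 \<noteq> enc NN (EE S') (WW S') 0"
proof
  assume eq: "enc NN (EE S) (WW S) 0 = enc NN (EE S') (WW S') 0"
  have N0: "0 < NN" by (simp add: NN_def B_def)
  have xN: "xv t < NN" using jt by (simp add: NN_def B_def xv_def)
  have eS: "{j, Suc j} \<in> EE T" for T using jt unfolding EE_def PE_def by blast
  have "dec (enc NN (EE S) (WW S) 0) (xv t) {j, Suc j} = dist_avoid (EE S) (WW S) 0 (xv t) {j, Suc j}"
    using D valid[of S] N0 xN eS[of S] unfolding is_SSDSO_def by blast
  moreover have "dec (enc NN (EE S') (WW S') 0) (xv t) {j, Suc j} = dist_avoid (EE S') (WW S') 0 (xv t) {j, Suc j}"
    using D valid[of S'] N0 xN eS[of S'] unfolding is_SSDSO_def by blast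
  ultimately have "dist_avoid (EE S) (WW S) 0 (xv t) {j, Suc j} = dist_avoid (EE S') (WW S') 0 (xv t) {j, Suc j}"
    using eq by simp
  moreover have "dist_avoid (EE S) (WW S) 0 (xv t) {j, Suc j} \<le> enat (2*k - j + 1)"
    using upper jt by blast
  moreover have "enat (2*k - j + 2) \<le> dist_avoid (EE S') (WW S') 0 (xv t) {j, Suc j}"
    using lower jt by blast
  ultimately have "enat (2*k - j + 2) \<le> enat (2*k - j + 1)" by (metis order_trans)
  thus False by simp
qed
end

lemma main:
  fixes n M :: nat and enc dec
  assumes n1: "1 \<le> n" and M1: "1 \<le> M" and D: "is_SSDSO M enc dec"
  shows "\<exists>N E w s. N \<le> 7 * n \<and> valid_graph N E w M \<and> s < N \<and>
         real (length (enc N E w s)) \<ge> 1/2 * min (sqrt (real M) * real n powr (3/2)) (real n ^ 2)"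
proof -
  define f where "f = nat \<lfloor>sqrt (real n * real M)\<rfloor>"
  define k where "k = min n f"
  have "1 \<le> real n" "1 \<le> real M" using n1 M1 by simp_all
  hence "1 * 1 \<le> real n * real M" by (intro mult_mono) auto
  hence sq1: "1 \<le> sqrt (real n * real M)" by simp
  have f1: "real f \<le> sqrt (real n * real M)" "sqrt (real n * real M) < real f + 1"
    unfolding f_def using sq1 by (simp_all add: of_nat_nat)
  have fge: "f \<ge> 1" using f1 sq1 by linarith
  have k1: "k \<ge> 1" using fge n1 by (simp add: k_def)
  have kf: "k \<le> f" "k \<le> n" by (simp_all add: k_def)
  have kk: "k * k \<le> n * M"
  proof -
    have "real k * real k \<le> real f * real f" using kf by (simp add: mult_mono)
    also have "\<dots> \<le> sqrt (real n * real M) * sqrt (real n * real M)"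
      by (rule mult_mono) (use f1 in auto)
    also have "\<dots> = real n * real M" by simp
    finally show ?thesis by (simp flip: of_nat_mult)
  qed
  interpret C: cons M k n using M1 k1 by unfold_locales
  let ?A = "Pow ({..<k} \<times> {..<n})"
  let ?F = "\<lambda>S. enc C.NN (C.EE S) (C.WW S) 0"
  have inj: "inj_on ?F ?A"
  proof (rule inj_onI, rule ccontr)
    fix S S' assume S: "S \<in> ?A" and S': "S' \<in> ?A" and eq: "?F S = ?F S'" and ne: "S \<noteq> S'"
    then obtain j t where "(j,t) \<in> S \<and> (j,t) \<notin> S' \<or> (j,t) \<in> S' \<and> (j,t) \<notin> S" by blast
    thus False
    proof
      assume a: "(j,t) \<in> S \<and> (j,t) \<notin> S'"
      hence "j < k" "t < n" using S by auto
      thus False using C.distinguish[OF D, of j t S S'] a eq by blast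
    next
      assume a: "(j,t) \<in> S' \<and> (j,t) \<notin> S"
      hence "j < k" "t < n" using S' by auto
      thus False using C.distinguish[OF D, of j t S' S] a eq by metis
    qed
  qed
  have cardA: "card ?A = 2 ^ (k*n)" by (simp add: card_Pow card_cartesian_product)
  obtain S where S: "S \<in> ?A" and len: "length (?F S) \<ge> k * n"
    using count_lists[OF inj _ cardA] by auto
  have NN: "C.NN \<le> 7 * n"
  proof -
    have R: "C.R = (2*k + M - 1) div M" by (simp add: C.R_def C.q_def C.T_def)
    have "C.R * M \<le> 2*k + M - 1" unfolding R by (rule div_times_less_eq_dividend)
    hence "k * C.R * M \<le> k * (2*k + M - 1)" by (simp add: mult.assoc)
    also have "\<dots> \<le> 2 * (k*k) + k * M" by (simp add: algebra_simps right_diff_distrib')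
    also have "\<dots> \<le> 2 * (n * M) + n * M" using kk mult_le_mono1[OF kf(2), of M] by linarith
    finally have "k * C.R * M \<le> (3 * n) * M" by simp
    hence "k * C.R \<le> 3 * n" using M1 by simp
    thus ?thesis unfolding C.NN_def C.B_def using kf n1 by simp
  qed
  have p: "real n powr (3/2) = real n * sqrt (real n)"
  proof -
    have "real n powr (3/2) = real n powr (1 + 1/2)" by simp
    also have "\<dots> = real n powr 1 * real n powr (1/2)" by (rule powr_add)
    finally show ?thesis using n1 by (simp add: powr_half_sqrt)
  qed
  have bound: "1/2 * min (sqrt (real M) * real n powr (3/2)) (real n ^ 2) \<le> real k * real n"
  proof (cases "k = n")
    case True
    have "min (sqrt (real M) * real n powr (3/2)) (real n ^ 2) \<le> real n ^ 2" by simp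
    moreover have "0 \<le> real n ^ 2" by simp
    ultimately have "1/2 * min (sqrt (real M) * real n powr (3/2)) (real n ^ 2) \<le> real n ^ 2" by linarith
    thus ?thesis using True by (simp add: power2_eq_square)
  next
    case False
    hence kf': "k = f" by (simp add: k_def min_def split: if_splits)
    have "sqrt (real n * real M) \<le> 2 * real k" using f1 fge kf' by simp
    hence "sqrt (real M) * sqrt (real n) \<le> 2 * real k" by (simp add: real_sqrt_mult mult.commute)
    hence "sqrt (real M) * sqrt (real n) * real n \<le> 2 * real k * real n" by (simp add: mult_right_mono)
    hence "sqrt (real M) * real n powr (3/2) \<le> 2 * (real k * real n)" unfolding p by (simp add: algebra_simps)
    thus ?thesis by linarith
  qed
  have g1: "C.NN \<le> 7 * n" by (rule NN)
  have g2: "valid_graph C.NN (C.EE S) (C.WW S) M" by (rule C.valid)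
  have g3: "0 < C.NN" by (simp add: C.NN_def C.B_def)
  have "real k * real n \<le> real (length (?F S))" using len by (simp flip: of_nat_mult)
  hence g4: "1/2 * min (sqrt (real M) * real n powr (3/2)) (real n ^ 2) \<le> real (length (?F S))"
    using bound by simp
  show ?thesis using g1 g2 g3 g4 by blast
qed

theorem theorem4:
  shows "\<exists>(C::nat) (c::real) (n0::nat). c > 0 \<and>
    (\<forall>n \<ge> n0. \<forall>M \<ge> (1::nat). \<forall>enc dec. is_SSDSO M enc dec \<longrightarrow>
      (\<exists>N E w s. N \<le> C * n \<and> valid_graph N E w M \<and> s < N \<and>
         real (length (enc N E w s)) \<ge> c * min (sqrt (real M) * real n powr (3/2)) (real n ^ 2)))"
  using main by (intro exI[of _ 7] exI[of _ "1/2"] exI[of _ 1]) auto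

end
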